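(* Let $((A,\cdot),N)$ be a Nijenhuis algebra, $((M,\triangleright,\triangleleft),N_M)$ a Nijenhuis bimodule, and $0\to((M,0),N_M)\xrightarrow{i}((E,\cdot_E),N_E)\xrightarrow{p}((A,\cdot),N)\to0$ an abelian extension inducing this bimodule structure. Then there is a group isomorphism $\mathrm{Aut}_{M,A}(E,N_E)\cong Z^1_{\mathrm{NAlg}}((A,N);(M,N_M))$. Consequently the group $\mathrm{Aut}_{M,A}(E,N_E)$ is abelian.
   Context: Over a field of characteristic $0$. Nijenhuis algebra: associative $(A,\cdot)$ with linear $N$, $N(a)N(b)=N(N(a)b+aN(b)-N(ab))$; Nijenhuis bimodule: $A$-bimodule with linear $N_M$, $N(a)\triangleright N_M(u)=N_M(N(a)\triangleright u+a\triangleright N_M(u)-N_M(a\triangleright u))$, $N_M(u)\triangleleft N(a)=N_M(N_M(u)\triangleleft a+u\triangleleft N(a)-N_M(u\triangleleft a))$. Abelian extension: Nijenhuis algebra $E$ with a short exact sequence of Nijenhuis algebra homomorphisms (algebra maps commuting with the operators) as displayed ($M$ with zero multiplication, identified with $i(M)$), such that for any linear section $s$ of $p$, $a\triangleright u=s(a)\cdot_Eu$ and $u\triangleleft a=u\cdot_Es(a)$. $\mathrm{Aut}_{M,A}(E,N_E)$ is the group (under composition) of Nijenhuis algebra automorphisms $\varphi$ of $E$ with $\varphi(M)\subseteq M$, $\varphi|_M=\mathrm{Id}_M$ and $p\varphi s=\mathrm{Id}_A$. $Z^1_{\mathrm{NAlg}}((A,N);(M,N_M))$ is the additive group of linear maps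 $d:A\to M$ with $d(a\cdot b)=a\triangleright d(b)+d(a)\triangleleft b$ for all $a,b$ and $N_M\circ d=d\circ N$ (the 1-cocycles of the Nijenhuis algebra cohomology). *)

theory Defs
  imports Complex_Main "HOL-Algebra.Group"
begin

definition bilinear_op ::
  "('k::field \<Rightarrow> 'a::ab_group_add \<Rightarrow> 'a) \<Rightarrow> ('k \<Rightarrow> 'b::ab_group_add \<Rightarrow> 'b) \<Rightarrow>
   ('k \<Rightarrow> 'c::ab_group_add \<Rightarrow> 'c) \<Rightarrow> ('a \<Rightarrow> 'b \<Rightarrow> 'c) \<Rightarrow> bool" where
  "bilinear_op sa sb sc f \<longleftrightarrow>
     (\<forall>a. Vector_Spaces.linear sb sc (f a)) \<and> (\<forall>b. Vector_Spaces.linear sa sc (\<lambda>a. f a b))"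

definition assoc_algebra ::
  "('k::field \<Rightarrow> 'a::ab_group_add \<Rightarrow> 'a) \<Rightarrow> ('a \<Rightarrow> 'a \<Rightarrow> 'a) \<Rightarrow> bool" where
  "assoc_algebra s mul \<longleftrightarrow> vector_space s \<and> bilinear_op s s s mul \<and>
     (\<forall>a b c. mul (mul a b) c = mul a (mul b c))"

definition nijenhuis_algebra ::
  "('k::field \<Rightarrow> 'a::ab_group_add \<Rightarrow> 'a) \<Rightarrow> ('a \<Rightarrow> 'a \<Rightarrow> 'a) \<Rightarrow> ('a \<Rightarrow> 'a) \<Rightarrow> bool" where
  "nijenhuis_algebra s mul N \<longleftrightarrow> assoc_algebra s mul \<and> Vector_Spaces.linear s s N \<and>
     (\<forall>a b. mul (N a) (N b) = N (mul (N a) b + mul a (N b) - N (mul a b)))"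

definition bimodule ::
  "('k::field \<Rightarrow> 'a::ab_group_add \<Rightarrow> 'a) \<Rightarrow> ('a \<Rightarrow> 'a \<Rightarrow> 'a) \<Rightarrow>
   ('k \<Rightarrow> 'm::ab_group_add \<Rightarrow> 'm) \<Rightarrow> ('a \<Rightarrow> 'm \<Rightarrow> 'm) \<Rightarrow> ('m \<Rightarrow> 'a \<Rightarrow> 'm) \<Rightarrow> bool" where
  "bimodule sA mul sM l r \<longleftrightarrow> vector_space sM \<and>
     bilinear_op sA sM sM l \<and> bilinear_op sM sA sM r \<and>
     (\<forall>a b u. l (mul a b) u = l a (l b u)) \<and>
     (\<forall>a b u. r u (mul a b) = r (r u a) b) \<and>
     (\<forall>a b u. r (l a u) b = l a (r u b))"

definition nijenhuis_bimodule ::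
  "('k::field \<Rightarrow> 'a::ab_group_add \<Rightarrow> 'a) \<Rightarrow> ('a \<Rightarrow> 'a \<Rightarrow> 'a) \<Rightarrow> ('a \<Rightarrow> 'a) \<Rightarrow>
   ('k \<Rightarrow> 'm::ab_group_add \<Rightarrow> 'm) \<Rightarrow> ('a \<Rightarrow> 'm \<Rightarrow> 'm) \<Rightarrow> ('m \<Rightarrow> 'a \<Rightarrow> 'm) \<Rightarrow> ('m \<Rightarrow> 'm) \<Rightarrow> bool" where
  "nijenhuis_bimodule sA mul N sM l r NM \<longleftrightarrow> bimodule sA mul sM l r \<and>
     Vector_Spaces.linear sM sM NM \<and>
     (\<forall>a u. l (N a) (NM u) = NM (l (N a) u + l a (NM u) - NM (l a u))) \<and>
     (\<forall>a u. r (NM u) (N a) = NM (r (NM u) a + r u (N a) - NM (r u a)))"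

definition abelian_extension ::
  "('k::field \<Rightarrow> 'a::ab_group_add \<Rightarrow> 'a) \<Rightarrow> ('a \<Rightarrow> 'a \<Rightarrow> 'a) \<Rightarrow> ('a \<Rightarrow> 'a) \<Rightarrow>
   ('k \<Rightarrow> 'm::ab_group_add \<Rightarrow> 'm) \<Rightarrow> ('a \<Rightarrow> 'm \<Rightarrow> 'm) \<Rightarrow> ('m \<Rightarrow> 'a \<Rightarrow> 'm) \<Rightarrow> ('m \<Rightarrow> 'm) \<Rightarrow>
   ('k \<Rightarrow> 'e::ab_group_add \<Rightarrow> 'e) \<Rightarrow> ('e \<Rightarrow> 'e \<Rightarrow> 'e) \<Rightarrow> ('e \<Rightarrow> 'e) \<Rightarrow>
   ('m \<Rightarrow> 'e) \<Rightarrow> ('e \<Rightarrow> 'a) \<Rightarrow> bool" where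
  "abelian_extension sA mul N sM l r NM sE mulE NE i p \<longleftrightarrow>
     nijenhuis_algebra sE mulE NE \<and>
     Vector_Spaces.linear sM sE i \<and> Vector_Spaces.linear sE sA p \<and>
     inj i \<and> surj p \<and> range i = {e. p e = 0} \<and>
     (\<forall>u v. i 0 = mulE (i u) (i v)) \<and>
     (\<forall>x y. p (mulE x y) = mul (p x) (p y)) \<and>
     (\<forall>u. NE (i u) = i (NM u)) \<and> (\<forall>x. p (NE x) = N (p x)) \<and>
     (\<forall>s. Vector_Spaces.linear sA sE s \<and> (\<forall>a. p (s a) = a) \<longrightarrow>
        (\<forall>a u. i (l a u) = mulE (s a) (i u) \<and> i (r u a) = mulE (i u) (s a)))"

definition Aut_MA ::
  "('k::field \<Rightarrow> 'a::ab_group_add \<Rightarrow> 'a) \<Rightarrow> ('k \<Rightarrow> 'e::ab_group_add \<Rightarrow> 'e) \<Rightarrow>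
   ('e \<Rightarrow> 'e \<Rightarrow> 'e) \<Rightarrow> ('e \<Rightarrow> 'e) \<Rightarrow> ('m \<Rightarrow> 'e) \<Rightarrow> ('e \<Rightarrow> 'a) \<Rightarrow> ('e \<Rightarrow> 'e) set" where
  "Aut_MA sA sE mulE NE i p = {\<phi>.
     Vector_Spaces.linear sE sE \<phi> \<and> bij \<phi> \<and>
     (\<forall>x y. \<phi> (mulE x y) = mulE (\<phi> x) (\<phi> y)) \<and> (\<forall>x. \<phi> (NE x) = NE (\<phi> x)) \<and>
     \<phi> ` range i \<subseteq> range i \<and> (\<forall>u. \<phi> (i u) = i u) \<and>
     (\<forall>s. Vector_Spaces.linear sA sE s \<and> (\<forall>a. p (s a) = a) \<longrightarrow> (\<forall>a. p (\<phi> (s a)) = a))}"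

definition Aut_MA_group ::
  "('k::field \<Rightarrow> 'a::ab_group_add \<Rightarrow> 'a) \<Rightarrow> ('k \<Rightarrow> 'e::ab_group_add \<Rightarrow> 'e) \<Rightarrow>
   ('e \<Rightarrow> 'e \<Rightarrow> 'e) \<Rightarrow> ('e \<Rightarrow> 'e) \<Rightarrow> ('m \<Rightarrow> 'e) \<Rightarrow> ('e \<Rightarrow> 'a) \<Rightarrow> ('e \<Rightarrow> 'e) monoid" where
  "Aut_MA_group sA sE mulE NE i p =
     \<lparr>carrier = Aut_MA sA sE mulE NE i p, mult = (\<circ>), one = id\<rparr>"

definition Z1_NAlg ::
  "('a \<Rightarrow> 'a \<Rightarrow> 'a) \<Rightarrow> ('a \<Rightarrow> 'a) \<Rightarrow> ('k::field \<Rightarrow> 'a::ab_group_add \<Rightarrow> 'a) \<Rightarrow>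
   ('k \<Rightarrow> 'm::ab_group_add \<Rightarrow> 'm) \<Rightarrow> ('a \<Rightarrow> 'm \<Rightarrow> 'm) \<Rightarrow> ('m \<Rightarrow> 'a \<Rightarrow> 'm) \<Rightarrow> ('m \<Rightarrow> 'm) \<Rightarrow>
   ('a \<Rightarrow> 'm) set" where
  "Z1_NAlg mul N sA sM l r NM = {d.
     Vector_Spaces.linear sA sM d \<and>
     (\<forall>a b. d (mul a b) = l a (d b) + r (d a) b) \<and> (\<forall>a. NM (d a) = d (N a))}"

definition Z1_NAlg_group ::
  "('a \<Rightarrow> 'a \<Rightarrow> 'a) \<Rightarrow> ('a \<Rightarrow> 'a) \<Rightarrow> ('k::field \<Rightarrow> 'a::ab_group_add \<Rightarrow> 'a) \<Rightarrow>
   ('k \<Rightarrow> 'm::ab_group_add \<Rightarrow> 'm) \<Rightarrow> ('a \<Rightarrow> 'm \<Rightarrow> 'm) \<Rightarrow> ('m \<Rightarrow> 'a \<Rightarrow> 'm) \<Rightarrow> ('m \<Rightarrow> 'm) \<Rightarrow>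
   ('a \<Rightarrow> 'm) monoid" where
  "Z1_NAlg_group mul N sA sM l r NM =
     \<lparr>carrier = Z1_NAlg mul N sA sM l r NM, mult = (\<lambda>d d' a. d a + d' a), one = (\<lambda>a. 0)\<rparr>"

end

theory Submission
  imports Defs
begin

lemma addhom:
  fixes f :: "'a::ab_group_add \<Rightarrow> 'b::ab_group_add"
  assumes "\<And>x y. f (x+y) = f x + f y"
  shows "f 0 = 0" and "f (-x) = - f x" and "f (x - y) = f x - f y"
proof -
  have "f 0 = f 0 + f 0" using assms[of 0 0] by simp
  thus f0: "f 0 = 0" by simp
  have "f (-x) + f x = f 0" using assms[of "-x" x] by simp
  with f0 show fn: "f (-x) = - f x" by (simp add: eq_neg_iff_add_eq_0)
  have "f (x - y) = f x + f (-y)" using assms[of x "-y"] by simp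
  also have "f (-y) = - f y" using assms[of "-y" y] f0 by (simp add: eq_neg_iff_add_eq_0)
  finally show "f (x - y) = f x - f y" by simp
qed

lemma lin_add: "Vector_Spaces.linear s1 s2 f \<Longrightarrow> f (x+y) = f x + f y" by (simp add: Vector_Spaces.linear_iff)
lemma lin_scale: "Vector_Spaces.linear s1 s2 f \<Longrightarrow> f (s1 c x) = s2 c (f x)" by (simp add: Vector_Spaces.linear_iff)
lemma lin_0: "Vector_Spaces.linear s1 s2 f \<Longrightarrow> f 0 = 0" by (rule addhom(1), erule lin_add)
lemma lin_neg: "Vector_Spaces.linear s1 s2 f \<Longrightarrow> f (-x) = - f x" by (rule addhom(2), erule lin_add)
lemma lin_diff: "Vector_Spaces.linear s1 s2 f \<Longrightarrow> f (x-y) = f x - f y" by (rule addhom(3), erule lin_add)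

locale ctx =
  fixes sA :: "'k::field \<Rightarrow> 'a::ab_group_add \<Rightarrow> 'a"
    and mul :: "'a \<Rightarrow> 'a \<Rightarrow> 'a" and N :: "'a \<Rightarrow> 'a"
    and sM :: "'k \<Rightarrow> 'm::ab_group_add \<Rightarrow> 'm"
    and l :: "'a \<Rightarrow> 'm \<Rightarrow> 'm" and r :: "'m \<Rightarrow> 'a \<Rightarrow> 'm" and NM :: "'m \<Rightarrow> 'm"
    and sE :: "'k \<Rightarrow> 'e::ab_group_add \<Rightarrow> 'e"
    and mulE :: "'e \<Rightarrow> 'e \<Rightarrow> 'e" and NE :: "'e \<Rightarrow> 'e"
    and i :: "'m \<Rightarrow> 'e" and p :: "'e \<Rightarrow> 'a"
  assumes NA: "nijenhuis_algebra sA mul N"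
    and NB: "nijenhuis_bimodule sA mul N sM l r NM"
    and AE: "abelian_extension sA mul N sM l r NM sE mulE NE i p"
begin

lemma vsA: "vector_space sA" using NA by (simp add: nijenhuis_algebra_def assoc_algebra_def)
lemma vsE: "vector_space sE" using AE by (simp add: abelian_extension_def nijenhuis_algebra_def assoc_algebra_def)
lemma vsM: "vector_space sM" using NB by (simp add: nijenhuis_bimodule_def bimodule_def)
lemma lin_i: "Vector_Spaces.linear sM sE i" using AE by (simp add: abelian_extension_def)
lemma lin_p: "Vector_Spaces.linear sE sA p" using AE by (simp add: abelian_extension_def)
lemma inj_i: "inj i" using AE by (simp add: abelian_extension_def)
lemma surj_p: "surj p" using AE by (simp add: abelian_extension_def)
lemma ker: "range i = {e. p e = 0}" using AE by (simp add: abelian_extension_def)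
lemma izero: "i 0 = mulE (i u) (i v)" using AE by (simp add: abelian_extension_def)
lemma p_mul: "p (mulE x y) = mul (p x) (p y)" using AE by (simp add: abelian_extension_def)
lemma NE_i: "NE (i u) = i (NM u)" using AE by (simp add: abelian_extension_def)
lemma p_NE: "p (NE x) = N (p x)" using AE by (simp add: abelian_extension_def)
lemma sect: "Vector_Spaces.linear sA sE s \<Longrightarrow> (\<forall>a. p (s a) = a) \<Longrightarrow>
   i (l a u) = mulE (s a) (i u) \<and> i (r u a) = mulE (i u) (s a)"
  using AE unfolding abelian_extension_def by blast
lemma lin_NE: "Vector_Spaces.linear sE sE NE" using AE by (simp add: abelian_extension_def nijenhuis_algebra_def)
lemma lin_mulE1: "Vector_Spaces.linear sE sE (mulE x)"
  using AE by (simp add: abelian_extension_def nijenhuis_algebra_def assoc_algebra_def bilinear_op_def)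
lemma lin_mulE2: "Vector_Spaces.linear sE sE (\<lambda>y. mulE y x)"
  using AE by (simp add: abelian_extension_def nijenhuis_algebra_def assoc_algebra_def bilinear_op_def)
lemma lin_NM: "Vector_Spaces.linear sM sM NM" using NB by (simp add: nijenhuis_bimodule_def)
lemma lin_l: "Vector_Spaces.linear sM sM (l a)"
  using NB by (simp add: nijenhuis_bimodule_def bimodule_def bilinear_op_def)
lemma lin_r: "Vector_Spaces.linear sM sM (\<lambda>u. r u a)"
  using NB by (simp add: nijenhuis_bimodule_def bimodule_def bilinear_op_def)

lemma i_add: "i (x + y) = i x + i y" by (rule lin_add[OF lin_i])
lemma i_0[simp]: "i 0 = 0" by (rule lin_0[OF lin_i])
lemma p_add: "p (x + y) = p x + p y" by (rule lin_add[OF lin_p])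
lemma NE_add: "NE (x + y) = NE x + NE y" by (rule lin_add[OF lin_NE])
lemma NM_add: "NM (x + y) = NM x + NM y" by (rule lin_add[OF lin_NM])
lemma l_add: "l a (x + y) = l a x + l a y" by (rule lin_add[OF lin_l])
lemma r_add: "r (x + y) a = r x a + r y a" using lin_add[OF lin_r] by blast
lemma mulE_add1: "mulE z (x + y) = mulE z x + mulE z y" by (rule lin_add[OF lin_mulE1])
lemma mulE_add2: "mulE (x + y) z = mulE x z + mulE y z" using lin_add[OF lin_mulE2] by blast
lemma ii0[simp]: "mulE (i u) (i v) = 0" using izero by simp
lemma p_i[simp]: "p (i u) = 0" using ker by auto

lemma vsp: "vector_space_pair sE sA" by (simp add: vector_space_pair_def vsE vsA)

definition s0 where "s0 = (SOME g. Vector_Spaces.linear sA sE g \<and> p \<circ> g = id)"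

lemma s0: "Vector_Spaces.linear sA sE s0" "p (s0 a) = a"
proof -
  have "\<exists>g. Vector_Spaces.linear sA sE g \<and> p \<circ> g = id"
    by (rule vector_space_pair.linear_surjective_right_inverse[OF vsp lin_p surj_p])
  hence "Vector_Spaces.linear sA sE s0 \<and> p \<circ> s0 = id" unfolding s0_def by (rule someI_ex)
  thus "Vector_Spaces.linear sA sE s0" "p (s0 a) = a" by (auto simp: fun_eq_iff)
qed

lemma in_range: "p e = 0 \<Longrightarrow> \<exists>u. e = i u" using ker by auto

lemma decomp: "\<exists>u. e = s0 (p e) + i u"
proof -
  have "p (e - s0 (p e)) = 0" by (simp add: lin_diff[OF lin_p] s0)
  then obtain u where "e - s0 (p e) = i u" using in_range by blast
  thus ?thesis by (metis add_diff_cancel_left' diff_add_cancel add.commute)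
qed

lemma sect0: "i (l a u) = mulE (s0 a) (i u)" "i (r u a) = mulE (i u) (s0 a)"
  using sect[OF s0(1)] s0(2) by auto

lemma mulE_i_right: "mulE x (i u) = i (l (p x) u)"
proof -
  obtain w where x: "x = s0 (p x) + i w" using decomp by blast
  have "mulE x (i u) = mulE (s0 (p x) + i w) (i u)" using x by simp
  also have "\<dots> = i (l (p x) u)" by (simp add: mulE_add2 sect0)
  finally show ?thesis .
qed

lemma mulE_i_left: "mulE (i u) x = i (r u (p x))"
proof -
  obtain w where x: "x = s0 (p x) + i w" using decomp by blast
  have "mulE (i u) x = mulE (i u) (s0 (p x) + i w)" using x by simp
  also have "\<dots> = i (r u (p x))" by (simp add: mulE_add1 sect0)
  finally show ?thesis .
qed

definition Phi :: "('a \<Rightarrow> 'm) \<Rightarrow> 'e \<Rightarrow> 'e" where "Phi d e = e + i (d (p e))"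

lemma p_Phi[simp]: "p (Phi d e) = p e" by (simp add: Phi_def p_add)

lemma Phi_comp: "Phi d \<circ> Phi d' = Phi (\<lambda>a. d a + d' a)"
  by (auto simp: fun_eq_iff Phi_def i_add add_ac p_add)

lemma Phi_zero: "Phi (\<lambda>a. 0) = id" by (auto simp: fun_eq_iff Phi_def)

lemma Phi_mul: "mulE (Phi d x) (Phi d y) = mulE x y + i (l (p x) (d (p y)) + r (d (p x)) (p y))"
  by (simp add: Phi_def mulE_add1 mulE_add2 mulE_i_right mulE_i_left i_add add_ac p_add)

lemma Phi_inj: assumes "Phi d = Phi d'" shows "d = d'"
proof
  fix a
  have "Phi d (s0 a) = Phi d' (s0 a)" using assms by simp
  hence "i (d a) = i (d' a)" by (simp add: Phi_def s0)
  thus "d a = d' a" using inj_i by (simp add: inj_eq)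
qed

abbreviation "Z1 \<equiv> Z1_NAlg mul N sA sM l r NM"
abbreviation "Aut \<equiv> Aut_MA sA sE mulE NE i p"

lemma Phi_in: assumes d: "d \<in> Z1" shows "Phi d \<in> Aut"
proof -
  have ld: "Vector_Spaces.linear sA sM d" and der: "\<And>a b. d (mul a b) = l a (d b) + r (d a) b"
    and nd: "\<And>a. NM (d a) = d (N a)" using d by (auto simp: Z1_NAlg_def)
  have lin: "Vector_Spaces.linear sE sE (Phi d)"
    unfolding Vector_Spaces.linear_iff
  proof (intro conjI allI vsE)
    fix x y show "Phi d (x + y) = Phi d x + Phi d y"
      by (simp add: Phi_def p_add lin_add[OF ld] i_add add_ac)
  next
    fix c x show "Phi d (sE c x) = sE c (Phi d x)"
      by (simp add: Phi_def lin_scale[OF lin_p] lin_scale[OF ld] lin_scale[OF lin_i]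
          vector_space.vector_space_assms(1)[OF vsE])
  qed
  have "Phi d \<circ> Phi (\<lambda>a. - d a) = id" "Phi (\<lambda>a. - d a) \<circ> Phi d = id"
    by (simp_all add: Phi_comp Phi_zero)
  hence bij: "bij (Phi d)" using o_bij by blast
  have mu: "Phi d (mulE x y) = mulE (Phi d x) (Phi d y)" for x y
    by (simp add: Phi_mul) (simp add: Phi_def p_mul der)
  have ne: "Phi d (NE x) = NE (Phi d x)" for x
    by (simp add: Phi_def NE_add NE_i p_NE nd)
  have fx: "Phi d (i u) = i u" for u by (simp add: Phi_def lin_0[OF ld])
  show ?thesis unfolding Aut_MA_def
    using lin bij mu ne fx by (auto simp: Phi_def p_add)
qed

lemma Aut_Phi: assumes ph: "\<phi> \<in> Aut" shows "\<exists>d\<in>Z1. \<phi> = Phi d"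
proof -
  have lph: "Vector_Spaces.linear sE sE \<phi>" and mu: "\<And>x y. \<phi> (mulE x y) = mulE (\<phi> x) (\<phi> y)"
    and ne: "\<And>x. \<phi> (NE x) = NE (\<phi> x)" and fx: "\<And>u. \<phi> (i u) = i u"
    and ps: "\<And>a. p (\<phi> (s0 a)) = a"
    using ph s0 unfolding Aut_MA_def by auto
  define d where "d a = inv_into UNIV i (\<phi> (s0 a) - s0 a)" for a
  have iD: "i (d a) = \<phi> (s0 a) - s0 a" for a
  proof -
    have "p (\<phi> (s0 a) - s0 a) = 0" by (simp add: lin_diff[OF lin_p] ps s0)
    then obtain u where "\<phi> (s0 a) - s0 a = i u" using in_range by blast
    thus ?thesis unfolding d_def by (simp add: inj_i)
  qed
  have eq: "\<phi> = Phi d"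
  proof
    fix e
    obtain u where e: "e = s0 (p e) + i u" using decomp by blast
    have "\<phi> (s0 a + i u) = Phi d (s0 a + i u)" for a
      by (simp add: lin_add[OF lph] fx Phi_def p_add s0 iD)
    thus "\<phi> e = Phi d e" using e by metis
  qed
  have ieq': "x = y" if "i x = i y" for x y using that inj_i by (simp add: inj_eq)
  have ld: "Vector_Spaces.linear sA sM d" unfolding Vector_Spaces.linear_iff
  proof (intro conjI allI vsA vsM)
    fix a b
    have "i (d (a + b)) = i (d a + d b)"
      by (simp add: iD i_add lin_add[OF s0(1)] lin_add[OF lph])
    thus "d (a + b) = d a + d b" by (rule ieq')
  next
    fix c a
    have "i (d (sA c a)) = i (sM c (d a))"
      by (simp add: iD lin_scale[OF lin_i] lin_scale[OF s0(1)] lin_scale[OF lph]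
          module.scale_right_diff_distrib[OF vsE[unfolded module_iff_vector_space[symmetric]]])
    thus "d (sA c a) = sM c (d a)" by (rule ieq')
  qed
  have der: "d (mul a b) = l a (d b) + r (d a) b" for a b
  proof -
    have "Phi d (mulE (s0 a) (s0 b)) = mulE (Phi d (s0 a)) (Phi d (s0 b))"
      using mu[of "s0 a" "s0 b"] eq by simp
    hence "i (d (mul a b)) = i (l a (d b) + r (d a) b)"
      by (simp add: Phi_mul s0 p_mul) (simp add: Phi_def p_mul s0)
    thus ?thesis by (rule ieq')
  qed
  have nd: "NM (d a) = d (N a)" for a
  proof -
    have "Phi d (NE (s0 a)) = NE (Phi d (s0 a))"
      using ne[of "s0 a"] eq by simp
    hence "i (d (N a)) = i (NM (d a))"
      by (simp add: Phi_def p_NE s0 NE_add NE_i)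
    thus ?thesis by (rule ieq'[symmetric])
  qed
  have "d \<in> Z1" using ld der nd by (simp add: Z1_NAlg_def)
  thus ?thesis using eq by blast
qed

lemma modM: "module sM" using vsM by (simp add: module_iff_vector_space)

lemma Z1_add: assumes "d \<in> Z1" "d' \<in> Z1" shows "(\<lambda>a. d a + d' a) \<in> Z1"
proof -
  have l1: "Vector_Spaces.linear sA sM d" "Vector_Spaces.linear sA sM d'" using assms by (auto simp: Z1_NAlg_def)
  have "Vector_Spaces.linear sA sM (\<lambda>a. d a + d' a)" unfolding Vector_Spaces.linear_iff
    using l1 by (simp add: vsA vsM lin_add lin_scale module.scale_right_distrib[OF modM] add_ac)
  thus ?thesis using assms by (simp add: Z1_NAlg_def l_add r_add NM_add add_ac)
qed

lemma Z1_0: "(\<lambda>a. 0) \<in> Z1"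
  by (simp add: Z1_NAlg_def Vector_Spaces.linear_iff vsA vsM module.scale_zero_right[OF modM]
      lin_0[OF lin_l] lin_0[OF lin_r] lin_0[OF lin_NM])

lemma Z1_neg: assumes "d \<in> Z1" shows "(\<lambda>a. - d a) \<in> Z1"
proof -
  have l1: "Vector_Spaces.linear sA sM d" using assms by (auto simp: Z1_NAlg_def)
  have "Vector_Spaces.linear sA sM (\<lambda>a. - d a)" unfolding Vector_Spaces.linear_iff
    using l1 by (simp add: vsA vsM lin_add lin_scale module.scale_minus_right[OF modM] add_ac)
  thus ?thesis using assms by (simp add: Z1_NAlg_def lin_neg[OF lin_l] lin_neg[OF lin_r] lin_neg[OF lin_NM] add_ac)
qed

lemma Aut_eq: "Aut = Phi ` Z1"
  using Phi_in Aut_Phi by blast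

end

theorem proposition5p5:
  fixes sA :: "'k::field_char_0 \<Rightarrow> 'a::ab_group_add \<Rightarrow> 'a"
    and mul :: "'a \<Rightarrow> 'a \<Rightarrow> 'a" and N :: "'a \<Rightarrow> 'a"
    and sM :: "'k \<Rightarrow> 'm::ab_group_add \<Rightarrow> 'm"
    and l :: "'a \<Rightarrow> 'm \<Rightarrow> 'm" and r :: "'m \<Rightarrow> 'a \<Rightarrow> 'm" and NM :: "'m \<Rightarrow> 'm"
    and sE :: "'k \<Rightarrow> 'e::ab_group_add \<Rightarrow> 'e"
    and mulE :: "'e \<Rightarrow> 'e \<Rightarrow> 'e" and NE :: "'e \<Rightarrow> 'e"
    and i :: "'m \<Rightarrow> 'e" and p :: "'e \<Rightarrow> 'a"
  assumes "nijenhuis_algebra sA mul N"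
    and "nijenhuis_bimodule sA mul N sM l r NM"
    and "abelian_extension sA mul N sM l r NM sE mulE NE i p"
  shows "group (Aut_MA_group sA sE mulE NE i p) \<and> group (Z1_NAlg_group mul N sA sM l r NM) \<and>
         Aut_MA_group sA sE mulE NE i p \<cong> Z1_NAlg_group mul N sA sM l r NM \<and>
         comm_group (Aut_MA_group sA sE mulE NE i p)"
proof -
  interpret ctx sA mul N sM l r NM sE mulE NE i p using assms by unfold_locales
  let ?G = "Aut_MA_group sA sE mulE NE i p" and ?H = "Z1_NAlg_group mul N sA sM l r NM"
  have cH: "comm_group ?H"
  proof (rule comm_groupI)
    fix x assume x: "x \<in> carrier ?H"
    show "\<exists>y\<in>carrier ?H. y \<otimes>\<^bsub>?H\<^esub> x = \<one>\<^bsub>?H\<^esub>"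
      using x Z1_neg by (intro bexI[of _ "\<lambda>a. - x a"]) (auto simp: Z1_NAlg_group_def)
  qed (auto simp: Z1_NAlg_group_def Z1_add Z1_0 add_ac)
  have cG: "comm_group ?G"
  proof (rule comm_groupI)
    fix x y assume "x \<in> carrier ?G" "y \<in> carrier ?G"
    then obtain d d' where "d \<in> Z1" "d' \<in> Z1" "x = Phi d" "y = Phi d'"
      by (auto simp: Aut_MA_group_def Aut_eq)
    thus "x \<otimes>\<^bsub>?G\<^esub> y \<in> carrier ?G" "x \<otimes>\<^bsub>?G\<^esub> y = y \<otimes>\<^bsub>?G\<^esub> x"
      by (auto simp: Aut_MA_group_def Aut_eq Phi_comp Z1_add add_ac)
  next
    show "\<one>\<^bsub>?G\<^esub> \<in> carrier ?G"
      using Phi_in[OF Z1_0] by (simp add: Aut_MA_group_def Phi_zero)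
  next
    fix x assume "x \<in> carrier ?G"
    then obtain d where d: "d \<in> Z1" "x = Phi d" by (auto simp: Aut_MA_group_def Aut_eq)
    show "\<exists>y\<in>carrier ?G. y \<otimes>\<^bsub>?G\<^esub> x = \<one>\<^bsub>?G\<^esub>"
      using d Z1_neg[OF d(1)] Phi_in
      by (intro bexI[of _ "Phi (\<lambda>a. - d a)"]) (auto simp: Aut_MA_group_def Phi_comp Phi_zero)
  qed (auto simp: Aut_MA_group_def)
  have "Phi \<in> iso ?H ?G"
    unfolding iso_def hom_def
  proof (intro CollectI conjI)
    show "Phi \<in> carrier ?H \<rightarrow> carrier ?G" using Phi_in by (auto simp: Z1_NAlg_group_def Aut_MA_group_def)
    show "\<forall>x\<in>carrier ?H. \<forall>y\<in>carrier ?H. Phi (x \<otimes>\<^bsub>?H\<^esub> y) = Phi x \<otimes>\<^bsub>?G\<^esub> Phi y"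
      by (simp add: Z1_NAlg_group_def Aut_MA_group_def Phi_comp)
    show "bij_betw Phi (carrier ?H) (carrier ?G)"
      unfolding bij_betw_def inj_on_def using Phi_inj
      by (auto simp: Z1_NAlg_group_def Aut_MA_group_def Aut_eq)
  qed
  hence "?H \<cong> ?G" by (rule is_isoI)
  hence "?G \<cong> ?H" using cH by (simp add: comm_group_def group.iso_sym)
  thus ?thesis using cG cH by (simp add: comm_group_def)
qed


end
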